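(* Let $\varphi_{nc}(z)=\dfrac{1+z}{\cos z}$. For every $r\in(0,1)$, $$\min_{|z|=r}\operatorname{Re}\varphi_{nc}(z)=\varphi_{nc}(-r)\quad\text{and}\quad \max_{|z|=r}\operatorname{Re}\varphi_{nc}(z)=\varphi_{nc}(r).$$ *)

theory Defs
  imports "HOL-Analysis.Analysis"
begin

definition phi_nc :: "complex \<Rightarrow> complex" where
  "phi_nc z = (1 + z) / cos z"

end

theory Submission
  imports Defs
begin

lemma pos_scale: "0 \<le> (c::real) * x \<Longrightarrow> 0 < c \<Longrightarrow> 0 \<le> x"
  by (simp add: zero_le_mult_iff)
lemma I1: fixes r :: real assumes r: "0 \<le> r" "r \<le> 1"
  shows "0 \<le> (1 - r^2/2)^2*(1 + r/2 - r^2/2) + (1 - r^2/2)*(2*(25/72)*r + 2*(35/72)*r^2) - 2*r*(1-r)*(2 + r + r^2/4)"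
proof -
  have e1: "72 * ((1 - r^2/2)^2*(1 + r/2 - r^2/2) + (1 - r^2/2)*(2*(25/72)*r + 2*(35/72)*r^2) - 2*r*(1-r)*(2 + r + r^2/4)) = (72) * 1 + (- 202) * r^1 + (106) * r^2 + (47) * r^3 + (55) * r^4 + (9) * r^5 + (- 9) * r^6"
    by (simp add: algebra_simps power2_eq_square power3_eq_cube power_numeral_even power_numeral_odd add_divide_distrib diff_divide_distrib)
  have e2: "(72) * 1 + (- 202) * r^1 + (106) * r^2 + (47) * r^3 + (55) * r^4 + (9) * r^5 + (- 9) * r^6 = 72 * (1-r)^13 + 734 * r^1 * (1-r)^12 + 3298 * r^2 * (1-r)^11 + 8473 * r^3 * (1-r)^10 + 13395 * r^4 * (1-r)^9 + 12783 * r^5 * (1-r)^8 + 6231 * r^6 * (1-r)^7 + 555 * r^7 * (1-r)^6 + 741 * r^8 * (1-r)^5 + 3585 * r^9 * (1-r)^4 + 4091 * r^10 * (1-r)^3 + 2272 * r^11 * (1-r)^2 + 652 * r^12 * (1-r)^1 + 78 * r^13"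
    by (simp add: algebra_simps power2_eq_square power3_eq_cube power_numeral_even power_numeral_odd)
  have "0 \<le> 72 * (1-r)^13 + 734 * r^1 * (1-r)^12 + 3298 * r^2 * (1-r)^11 + 8473 * r^3 * (1-r)^10 + 13395 * r^4 * (1-r)^9 + 12783 * r^5 * (1-r)^8 + 6231 * r^6 * (1-r)^7 + 555 * r^7 * (1-r)^6 + 741 * r^8 * (1-r)^5 + 3585 * r^9 * (1-r)^4 + 4091 * r^10 * (1-r)^3 + 2272 * r^11 * (1-r)^2 + 652 * r^12 * (1-r)^1 + 78 * r^13"
    using r by (intro add_nonneg_nonneg mult_nonneg_nonneg zero_le_power) auto
  then have "0 \<le> 72 * ((1 - r^2/2)^2*(1 + r/2 - r^2/2) + (1 - r^2/2)*(2*(25/72)*r + 2*(35/72)*r^2) - 2*r*(1-r)*(2 + r + r^2/4))" using e1 e2 by linarith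
  then show ?thesis by (rule pos_scale) simp
qed
lemma I2: fixes r :: real assumes r: "0 \<le> r" "r \<le> 1"
  shows "0 \<le> (1 - r^2/2)^2*(1 + r/4) + (1 - r^2/2)*((25/72)*r) - 1*r*(1-r)*(2 + r + r^2/4)"
proof -
  have e1: "144 * ((1 - r^2/2)^2*(1 + r/4) + (1 - r^2/2)*((25/72)*r) - 1*r*(1-r)*(2 + r + r^2/4)) = (144) * 1 + (- 202) * r^1 + (0) * r^2 + (47) * r^3 + (72) * r^4 + (9) * r^5"
    by (simp add: algebra_simps power2_eq_square power3_eq_cube power_numeral_even power_numeral_odd add_divide_distrib diff_divide_distrib)
  have e2: "(144) * 1 + (- 202) * r^1 + (0) * r^2 + (47) * r^3 + (72) * r^4 + (9) * r^5 = 144 * (1-r)^5 + 518 * r^1 * (1-r)^4 + 632 * r^2 * (1-r)^3 + 275 * r^3 * (1-r)^2 + 78 * r^4 * (1-r)^1 + 70 * r^5"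
    by (simp add: algebra_simps power2_eq_square power3_eq_cube power_numeral_even power_numeral_odd)
  have "0 \<le> 144 * (1-r)^5 + 518 * r^1 * (1-r)^4 + 632 * r^2 * (1-r)^3 + 275 * r^3 * (1-r)^2 + 78 * r^4 * (1-r)^1 + 70 * r^5"
    using r by (intro add_nonneg_nonneg mult_nonneg_nonneg zero_le_power) auto
  then have "0 \<le> 144 * ((1 - r^2/2)^2*(1 + r/4) + (1 - r^2/2)*((25/72)*r) - 1*r*(1-r)*(2 + r + r^2/4))" using e1 e2 by linarith
  then show ?thesis by (rule pos_scale) simp
qed
lemma I6: fixes r :: real assumes r: "0 \<le> r" "r \<le> 1"
  shows "0 \<le> (1 - r^2/2)^2*(2 + 3*r/4 - r^2/4) + (1 - r^2/2)*(3*(25/72)*r + (35/72)*r^2) - 3*r*(1-r)*(2 + r + r^2/4)"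
proof -
  have e1: "144 * ((1 - r^2/2)^2*(2 + 3*r/4 - r^2/4) + (1 - r^2/2)*(3*(25/72)*r + (35/72)*r^2) - 3*r*(1-r)*(2 + r + r^2/4)) = (288) * 1 + (- 606) * r^1 + (178) * r^2 + (141) * r^3 + (181) * r^4 + (27) * r^5 + (- 9) * r^6"
    by (simp add: algebra_simps power2_eq_square power3_eq_cube power_numeral_even power_numeral_odd add_divide_distrib diff_divide_distrib)
  have e2: "(288) * 1 + (- 606) * r^1 + (178) * r^2 + (141) * r^3 + (181) * r^4 + (27) * r^5 + (- 9) * r^6 = 288 * (1-r)^7 + 1410 * r^1 * (1-r)^6 + 2590 * r^2 * (1-r)^5 + 2021 * r^3 * (1-r)^4 + 485 * r^4 * (1-r)^3 + 154 * r^5 * (1-r)^2 + 422 * r^6 * (1-r)^1 + 200 * r^7"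
    by (simp add: algebra_simps power2_eq_square power3_eq_cube power_numeral_even power_numeral_odd)
  have "0 \<le> 288 * (1-r)^7 + 1410 * r^1 * (1-r)^6 + 2590 * r^2 * (1-r)^5 + 2021 * r^3 * (1-r)^4 + 485 * r^4 * (1-r)^3 + 154 * r^5 * (1-r)^2 + 422 * r^6 * (1-r)^1 + 200 * r^7"
    using r by (intro add_nonneg_nonneg mult_nonneg_nonneg zero_le_power) auto
  then have "0 \<le> 144 * ((1 - r^2/2)^2*(2 + 3*r/4 - r^2/4) + (1 - r^2/2)*(3*(25/72)*r + (35/72)*r^2) - 3*r*(1-r)*(2 + r + r^2/4))" using e1 e2 by linarith
  then show ?thesis by (rule pos_scale) simp
qed
lemma J2: fixes r :: real assumes r: "0 \<le> r" "r \<le> 1"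
  shows "0 \<le> (1 - r^2/2)^2*(2 + r/4 + r^2/4) + (1 - r^2/2)*((25/72)*r + r^2*(25/72 - 1 - r/2)) - 1*r*(1-r)*(2 + r + r^2/4)"
proof -
  have e1: "144 * ((1 - r^2/2)^2*(2 + r/4 + r^2/4) + (1 - r^2/2)*((25/72)*r + r^2*(25/72 - 1 - r/2)) - 1*r*(1-r)*(2 + r + r^2/4)) = (288) * 1 + (- 202) * r^1 + (- 202) * r^2 + (- 25) * r^3 + (119) * r^4 + (45) * r^5 + (9) * r^6"
    by (simp add: algebra_simps power2_eq_square power3_eq_cube power_numeral_even power_numeral_odd add_divide_distrib diff_divide_distrib)
  have e2: "(288) * 1 + (- 202) * r^1 + (- 202) * r^2 + (- 25) * r^3 + (119) * r^4 + (45) * r^5 + (9) * r^6 = 288 * (1-r)^6 + 1526 * r^1 * (1-r)^5 + 3108 * r^2 * (1-r)^4 + 2907 * r^3 * (1-r)^3 + 1132 * r^4 * (1-r)^2 + 118 * r^5 * (1-r)^1 + 32 * r^6"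
    by (simp add: algebra_simps power2_eq_square power3_eq_cube power_numeral_even power_numeral_odd)
  have "0 \<le> 288 * (1-r)^6 + 1526 * r^1 * (1-r)^5 + 3108 * r^2 * (1-r)^4 + 2907 * r^3 * (1-r)^3 + 1132 * r^4 * (1-r)^2 + 118 * r^5 * (1-r)^1 + 32 * r^6"
    using r by (intro add_nonneg_nonneg mult_nonneg_nonneg zero_le_power) auto
  then have "0 \<le> 144 * ((1 - r^2/2)^2*(2 + r/4 + r^2/4) + (1 - r^2/2)*((25/72)*r + r^2*(25/72 - 1 - r/2)) - 1*r*(1-r)*(2 + r + r^2/4))" using e1 e2 by linarith
  then show ?thesis by (rule pos_scale) simp
qed

lemma mono_p:
  fixes c2 c1 p p0 :: real
  assumes "0 \<le> p0" "p0 \<le> p" "0 \<le> c2 * (p + p0) + c1"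
  shows "p0^2 * c2 + p0 * c1 \<le> p^2 * c2 + p * c1"
proof -
  have "p^2 * c2 + p * c1 - (p0^2 * c2 + p0 * c1) = (p - p0) * (c2 * (p + p0) + c1)"
    by (simp add: algebra_simps power2_eq_square)
  also have "\<dots> \<ge> 0" using assms by simp
  finally show ?thesis by simp
qed

lemma quad_min:
  fixes a b c0 t r :: real
  assumes b: "0 \<le> b" and t: "0 \<le> t" "t \<le> r"
    and h0: "0 \<le> c0" and h1: "0 \<le> c0 + r*a + b*r^2" and h2: "0 \<le> 2*c0 + r*a"
  shows "0 \<le> c0 + a*t + b*t^2"
proof (cases "0 \<le> a")
  case True
  then show ?thesis using b t h0 by simp
next
  case an: False
  show ?thesis
  proof (cases "a + 2*b*r \<le> 0")
    case True
    have "c0 + a*t + b*t^2 - (c0 + r*a + b*r^2) = (t - r) * (a + b*(t + r))"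
      by (simp add: algebra_simps power2_eq_square)
    also have "\<dots> \<ge> 0"
    proof (rule mult_nonpos_nonpos)
      show "t - r \<le> 0" using t by simp
      have "b*(t + r) \<le> b*(2*r)" by (rule mult_left_mono) (use t b in auto)
      then show "a + b*(t + r) \<le> 0" using True by simp
    qed
    finally show ?thesis using h1 by simp
  next
    case False
    have bp: "0 < b" using False an t b by (cases "b = 0") auto
    have "(-a)*(-a) \<le> (-a)*(2*b*r)" by (rule mult_left_mono) (use False an in auto)
    then have sq: "a^2 \<le> (-a) * (2*b*r)" by (simp add: power2_eq_square)
    have "4*b*(c0 + a*t + b*t^2) = 4*b*c0 - a^2 + (2*b*t + a)^2"
      by (simp add: algebra_simps power2_eq_square)
    also have "\<dots> \<ge> 4*b*c0 - a^2" by simp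
    also have "4*b*c0 - a^2 \<ge> 2*b*(2*c0 + r*a)" using sq by (simp add: algebra_simps)
    also have "2*b*(2*c0 + r*a) \<ge> 0" using bp h2 by simp
    finally have "0 \<le> 4*b*(c0 + a*t + b*t^2)" by simp
    then show ?thesis using bp by (simp add: zero_le_mult_iff)
  qed
qed

lemma Qneg:
  fixes r x p :: real
  assumes r: "0<r" "r<1" and x: "-r \<le> x" "x \<le> 0" and p: "1 - r^2/2 \<le> p" "p \<le> 1"
  shows "(1-r)*(r-x)*(1 + (1+r/2)^2) \<le> p^2*(1 + (1+x)*(r-x)/4)
     + (25/72)*p*(1+x)*(r-x)*(1+(r^2-x^2)/4) + p*(-x+x^3/6)*(r-x)"
proof -
  define t where "t = -x"
  define K where "K = 2 + r + r^2/4"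
  define B0 where "B0 = p^2/4 + 25/72*p - (1-r)*K"
  define be where "be = p*(35/72 - p/4)"
  have t: "0 \<le> t" "t \<le> r" using x by (auto simp: t_def)
  define p0 where "p0 = 1 - r^2/2"
  have "r^2 \<le> 1" using r by (simp add: power_le_one)
  then have p00: "0 \<le> p0" by (simp add: p0_def)
  have p0p: "p0 \<le> p" "0 < p" using p \<open>r^2 \<le> 1\<close> unfolding p0_def by linarith+
  have be0: "0 \<le> be" using p0p p by (simp add: be_def)
  have i2: "0 \<le> p^2 + r*B0"
  proof -
    have "p0^2 * (1 + r/4) + p0 * ((25/72)*r) \<le> p^2 * (1 + r/4) + p * ((25/72)*r)"
      by (rule mono_p) (use p00 p0p r  in auto)
    moreover have "p^2 + r*B0 = p^2 * (1 + r/4) + p * ((25/72)*r) - 1*r*(1-r)*(2 + r + r^2/4)"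
      unfolding B0_def K_def  by (simp add: field_simps power2_eq_square)
    ultimately show ?thesis using I2[of r] r unfolding p0_def by linarith
  qed
  have i1: "0 \<le> (p^2 + r*B0) + r*(B0 + be*r) + be*r^2"
  proof -
    have c: "0 \<le> 1 + r/2 - r^2/2" using \<open>r^2 \<le> 1\<close> r by simp
    have "p0^2 * (1 + r/2 - r^2/2) + p0 * (2*(25/72)*r + 2*(35/72)*r^2) \<le> p^2 * (1 + r/2 - r^2/2) + p * (2*(25/72)*r + 2*(35/72)*r^2)"
      by (rule mono_p) (use p00 p0p r c in auto)
    moreover have "(p^2 + r*B0) + r*(B0 + be*r) + be*r^2 = p^2 * (1 + r/2 - r^2/2) + p * (2*(25/72)*r + 2*(35/72)*r^2) - 2*r*(1-r)*(2 + r + r^2/4)"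
      unfolding B0_def K_def be_def by (simp add: field_simps power2_eq_square)
    ultimately show ?thesis using I1[of r] r unfolding p0_def by linarith
  qed
  have i6: "0 \<le> 2*(p^2 + r*B0) + r*(B0 + be*r)"
  proof -
    have c: "0 \<le> 2 + 3*r/4 - r^2/4" using \<open>r^2 \<le> 1\<close> r by simp
    have "p0^2 * (2 + 3*r/4 - r^2/4) + p0 * (3*(25/72)*r + (35/72)*r^2) \<le> p^2 * (2 + 3*r/4 - r^2/4) + p * (3*(25/72)*r + (35/72)*r^2)"
      by (rule mono_p) (use p00 p0p r c in auto)
    moreover have "2*(p^2 + r*B0) + r*(B0 + be*r) = p^2 * (2 + 3*r/4 - r^2/4) + p * (3*(25/72)*r + (35/72)*r^2) - 3*r*(1-r)*(2 + r + r^2/4)"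
      unfolding B0_def K_def be_def by (simp add: field_simps power2_eq_square)
    ultimately show ?thesis using I6[of r] r unfolding p0_def by linarith
  qed
  have G: "0 \<le> (p^2 + r*B0) + (B0 + be*r)*t + be*t^2"
    by (rule quad_min[OF be0 t i2 i1 i6])
  have "t^3 \<le> t" using t r
    by (metis mult_left_mono mult_le_one power3_eq_cube mult.assoc mult_1_right order_trans less_imp_le)
  then have l1: "p*(5/6*t)*(r+t) \<le> p*(t - t^3/6)*(r+t)"
    using t p0p by (intro mult_right_mono mult_left_mono) auto
  have l2: "(25/72)*p*(1-t)*(r+t) \<le> (25/72)*p*(1-t)*(r+t)*(1+(r^2-t^2)/4)"
  proof -
    have "t^2 \<le> r^2" using t by (simp add: power_mono)
    then have "1 \<le> 1+(r^2-t^2)/4" by simp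
    moreover have "0 \<le> (25/72)*p*(1-t)*(r+t)" using t r p0p by simp
    ultimately show ?thesis by (metis mult_left_mono mult_1_right)
  qed
  have e: "p^2*(1 + (1-t)*(r+t)/4) + (25/72)*p*(1-t)*(r+t) + p*(5/6*t)*(r+t) - (1-r)*(r+t)*K
      = (p^2 + r*B0) + (B0 + be*r)*t + be*t^2"
    unfolding B0_def be_def by (simp add: algebra_simps power2_eq_square add_divide_distrib diff_divide_distrib)
  have "(1-r)*(r+t)*K \<le> p^2*(1 + (1-t)*(r+t)/4) + (25/72)*p*(1-t)*(r+t)*(1+(r^2-t^2)/4) + p*(t - t^3/6)*(r+t)"
    using G e l1 l2 by linarith
  moreover have "1 + (1+r/2)^2 = K" unfolding K_def by (simp add: power2_eq_square algebra_simps add_divide_distrib)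
  ultimately show ?thesis unfolding t_def by simp
qed

lemma Qpos:
  fixes r x p :: real
  assumes r: "0<r" "r<1" and x: "0 \<le> x" "x \<le> r" and p: "1 - r^2/2 \<le> p" "p \<le> 1"
  shows "(1-r)*(r-x)*(1 + (1+r/2)^2) + p*x*(r-x)*(1+r/2) \<le> p^2*(1 + (1+x)*(r-x)/4)
     + (25/72)*p*(1+x)*(r-x)*(1+(r^2-x^2)/4)"
proof -
  define d where "d = r - x"
  define K where "K = 2 + r + r^2/4"
  define B0 where "B0 = p^2/4 + 25/72*p - (1-r)*K"
  define bb where "bb = p*(1 + r/2 - 25/72 - p/4)"
  have d: "0 \<le> d" "d \<le> r" using x by (auto simp: d_def)
  define p0 where "p0 = 1 - r^2/2"
  have "r^2 \<le> 1" using r by (simp add: power_le_one)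
  then have p00: "0 \<le> p0" by (simp add: p0_def)
  have p0p: "p0 \<le> p" "0 < p" using p \<open>r^2 \<le> 1\<close> unfolding p0_def by linarith+
  have bb0: "0 \<le> bb" using p0p p r by (simp add: bb_def)
  have i2: "0 \<le> p^2 + r*B0"
  proof -
    have "p0^2 * (1 + r/4) + p0 * ((25/72)*r) \<le> p^2 * (1 + r/4) + p * ((25/72)*r)"
      by (rule mono_p) (use p00 p0p r  in auto)
    moreover have "p^2 + r*B0 = p^2 * (1 + r/4) + p * ((25/72)*r) - 1*r*(1-r)*(2 + r + r^2/4)"
      unfolding B0_def K_def  by (simp add: field_simps power2_eq_square)
    ultimately show ?thesis using I2[of r] r unfolding p0_def by linarith
  qed
  have h0: "0 \<le> p^2" by simp
  have h1: "0 \<le> p^2 + r*(B0 - bb*r) + bb*r^2" using i2 by (simp add: algebra_simps power2_eq_square)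
  have h2: "0 \<le> 2*p^2 + r*(B0 - bb*r)"
  proof -
    have c: "0 \<le> (2 + r/4 + r^2/4) * (p + p0) + ((25/72)*r + r^2*(25/72 - 1 - r/2))"
    proof -
      have "1 \<le> p + p0" using p0p \<open>r^2 \<le> 1\<close> by (simp add: p0_def)
      then have "2 * 1 \<le> (2 + r/4 + r^2/4) * (p + p0)"
        by (intro mult_mono) (use r in auto)
      moreover have "r^2*(1 + r/2) \<le> 1*(3/2)" using \<open>r^2 \<le> 1\<close> r by (intro mult_mono) auto
      moreover have "0 \<le> (25/72)*r + r^2*(25/72)" using r by simp
      ultimately show ?thesis by (simp add: algebra_simps)
    qed
    have "p0^2 * (2 + r/4 + r^2/4) + p0 * ((25/72)*r + r^2*(25/72 - 1 - r/2)) \<le> p^2 * (2 + r/4 + r^2/4) + p * ((25/72)*r + r^2*(25/72 - 1 - r/2))"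
      by (rule mono_p) (use p00 p0p r c in auto)
    moreover have "2*p^2 + r*(B0 - bb*r) = p^2 * (2 + r/4 + r^2/4) + p * ((25/72)*r + r^2*(25/72 - 1 - r/2)) - 1*r*(1-r)*(2 + r + r^2/4)"
      unfolding B0_def K_def bb_def by (simp add: field_simps power2_eq_square)
    ultimately show ?thesis using J2[of r] r unfolding p0_def by linarith
  qed
  have G: "0 \<le> p^2 + (B0 - bb*r)*d + bb*d^2"
    by (rule quad_min[OF bb0 d h0 h1 h2])
  have l2: "(25/72)*p*(1+x)*d \<le> (25/72)*p*(1+x)*d*(1+(r^2-x^2)/4)"
  proof -
    have "x^2 \<le> r^2" using x by (simp add: power_mono)
    then have "1 \<le> 1+(r^2-x^2)/4" by simp
    moreover have "0 \<le> (25/72)*p*(1+x)*d" using x d p0p by simp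
    ultimately show ?thesis by (metis mult_left_mono mult_1_right)
  qed
  have e: "p^2*(1 + (1+x)*d/4) + (25/72)*p*(1+x)*d - (1-r)*d*K - p*x*d*(1+r/2)
      = p^2 + (B0 - bb*r)*d + bb*d^2"
    unfolding B0_def bb_def d_def by (simp add: algebra_simps power2_eq_square add_divide_distrib diff_divide_distrib)
  have "(1-r)*d*K + p*x*d*(1+r/2) \<le> p^2*(1 + (1+x)*d/4) + (25/72)*p*(1+x)*d*(1+(r^2-x^2)/4)"
    using G e l2 by linarith
  moreover have "1 + (1+r/2)^2 = K" unfolding K_def by (simp add: power2_eq_square algebra_simps add_divide_distrib)
  ultimately show ?thesis unfolding d_def by simp
qed

lemma cos_lower: "1 - t^2/2 \<le> cos (t::real)"
proof -
  have "cos t = cos (2 * (t/2))" by simp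
  also have "\<dots> = 1 - 2 * sin (t/2) ^ 2" by (rule cos_double_sin)
  finally have c: "cos t = 1 - 2 * sin (t/2) ^ 2" .
  have "\<bar>sin (t/2)\<bar> \<le> \<bar>t/2\<bar>" by (rule abs_sin_x_le_abs_x)
  then have "sin (t/2) ^ 2 \<le> (t/2)^2"
    by (metis abs_ge_zero power2_abs power_mono)
  then show ?thesis using c by (simp add: power_divide)
qed

lemma sin_lower:
  fixes t :: real
  assumes "0 \<le> t"
  shows "t - t^3/6 \<le> sin t"
proof -
  have *: "sin a - a + a^3/6 \<le> sin b - b + b^3/6" if "0 \<le> a" "a \<le> b" for a b :: real
  proof (rule DERIV_nonneg_imp_nondecreasing[OF that(2)])
    fix s assume "a \<le> s" "s \<le> b"
    show "\<exists>y. ((\<lambda>t. sin t - t + t^3/6) has_real_derivative y) (at s) \<and> 0 \<le> y"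
      apply (rule exI[of _ "cos s - 1 + s^2/2"])
      apply (intro conjI)
       apply (auto intro!: derivative_eq_intros simp: power2_eq_square)
      using cos_lower[of s] by (simp add: power2_eq_square)
  qed
  show ?thesis using *[of 0 t] assms by simp
qed

lemma cos_diff_lower:
  fixes x r :: real
  assumes "\<bar>x\<bar> \<le> r" "r < 1"
  shows "cos r + (25/72)*(r^2 - x^2) \<le> cos x"
proof -
  define v1 where "v1 = (x + r)/2"
  define v2 where "v2 = (r - x)/2"
  have v1: "0 \<le> v1" "v1 \<le> 1" and v2: "0 \<le> v2" "v2 \<le> 1"
    using assms by (auto simp: v1_def v2_def)
  have e: "cos x - cos r = 2 * sin v1 * sin v2"
    using cos_diff_cos[of x r] by (simp add: v1_def v2_def)
  have l1: "5/6 * v1 \<le> sin v1"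
  proof -
    have "v1^3 \<le> v1" using v1 mult_left_mono[OF mult_le_one[OF v1(2) v1(1) v1(2)] v1(1)] by (simp add: power3_eq_cube mult.assoc)
    then show ?thesis using sin_lower[OF v1(1)] by simp
  qed
  have l2: "5/6 * v2 \<le> sin v2"
  proof -
    have "v2^3 \<le> v2" using v2 mult_left_mono[OF mult_le_one[OF v2(2) v2(1) v2(2)] v2(1)] by (simp add: power3_eq_cube mult.assoc)
    then show ?thesis using sin_lower[OF v2(1)] by simp
  qed
  have "(5/6 * v1) * (5/6 * v2) \<le> sin v1 * sin v2"
    by (rule mult_mono[OF l1 l2]) (use v1 v2 sin_ge_zero pi_gt3 in auto)
  moreover have "r^2 - x^2 = 4 * v1 * v2" unfolding v1_def v2_def by algebra
  ultimately show ?thesis using e by simp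
qed

lemma cos_sq_diff:
  fixes x r :: real
  shows "(cos x)^2 - (cos r)^2 = sin (r + x) * sin (r - x)"
proof -
  have "sin (r + x) * sin (r - x) = (sin r * cos x)^2 - (cos r * sin x)^2"
    by (simp add: sin_add sin_diff algebra_simps power2_eq_square)
  also have "\<dots> = (cos x)^2 - (cos r)^2"
    by (simp add: sin_squared_eq algebra_simps power_mult_distrib)
  finally show ?thesis by simp
qed

lemma main_lower:
  fixes z :: complex and r :: real
  assumes r: "0 < r" "r < 1" and z: "cmod z = r" and yp: "0 \<le> Im z"
  shows "(1 - r) / cos r \<le> Re (phi_nc z)"
proof -
  define x where "x = Re z"
  define y where "y = Im z"
  define E where "E = exp y"
  define F where "F = exp (-y)"
  define a where "a = cos x"
  define b where "b = sin x"
  define p where "p = cos r"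
  define C where "C = (E + F)/2"
  define S where "S = (E - F)/2"
  define u where "u = y^2"
  have xy: "x^2 + y^2 = r^2" using z cmod_power2[of z] by (simp add: x_def y_def)
  have y0: "0 \<le> y" using yp by (simp add: y_def)
  have yr: "y \<le> r" using xy y0 r
    by (metis abs_of_nonneg add_0 le_add_same_cancel2 less_imp_le power2_le_imp_le zero_le_power2)
  have xr: "\<bar>x\<bar> \<le> r" using xy r
    by (metis abs_of_pos add_0 add.commute le_add_same_cancel2 power2_le_imp_le power2_abs zero_le_power2 less_imp_le abs_ge_zero)
  have u: "u = (r - x) * (r + x)" using xy by (simp add: u_def algebra_simps power2_eq_square)
  have EF: "E * F = 1" by (simp add: E_def F_def flip: exp_add)
  have pi2: "r < pi/2" using r pi_gt3 by linarith
  have p0: "0 < p" unfolding p_def by (rule cos_gt_zero) (use r pi2 in auto)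
  have p1: "p \<le> 1" by (simp add: p_def)
  have pl: "1 - r^2/2 \<le> p" unfolding p_def by (rule cos_lower)
  have ab: "a^2 + b^2 = 1" by (simp add: a_def b_def)
  have "C^2 - S^2 = E * F" by (simp add: C_def S_def power2_eq_square field_simps)
  then have CS: "C^2 - S^2 = 1" using EF by simp
  have Sy: "y \<le> S" using real_le_x_sinh[OF y0] by (simp add: S_def E_def F_def exp_minus)
  have Eup: "E \<le> 1 + y + y^2" unfolding E_def by (rule exp_bound) (use y0 yr r in auto)
  have Flow: "1 - y \<le> F" using exp_ge_add_one_self[of "-y"] by (simp add: F_def)
  have Elow: "1 + y + y^2/2 \<le> E" unfolding E_def by (rule exp_lower_Taylor_quadratic[OF y0])
  have Sup: "S \<le> y + y^2/2" using Eup Flow by (simp add: S_def)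
  have Clow: "1 + u/4 \<le> C" using Elow Flow by (simp add: C_def u_def)
  have u2: "u = r^2 - x^2" using xy by (simp add: u_def)
  have alow: "p + (25/72)*u \<le> a"
    using cos_diff_lower[OF xr r(2)] unfolding u2 a_def p_def by simp
  have asq: "a^2 \<le> p^2 + u"
  proof -
    have "a^2 - p^2 = sin (r + x) * sin (r - x)" by (simp add: a_def p_def cos_sq_diff)
    also have "\<dots> \<le> (r + x) * (r - x)"
      apply (rule mult_mono)
      using xr sin_x_le_x[of "r+x"] sin_x_le_x[of "r-x"] sin_ge_zero[of "r-x"] pi_gt3 r by auto
    finally show ?thesis using u by (simp add: algebra_simps)
  qed
  have u0: "0 \<le> u" by (simp add: u_def)
  have ap: "p \<le> a" using alow u0 by simp
  have a0: "0 < a" using ap p0 by simp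
  have recos: "Re (cos z) = a * C" by (simp add: Re_cos a_def C_def E_def F_def x_def y_def)
  have imcos: "Im (cos z) = - (b * S)" by (simp add: Im_cos b_def S_def E_def F_def x_def y_def field_simps)
  define N where "N = (1 + x) * (a * C) - y * (b * S)"
  define D where "D = a^2 + S^2"
  have D: "(Re (cos z))^2 + (Im (cos z))^2 = D"
  proof -
    have "(Re (cos z))^2 + (Im (cos z))^2 = a^2 * C^2 + b^2 * S^2"
      by (simp add: recos imcos power_mult_distrib)
    also have "\<dots> = D" using ab CS unfolding D_def
      by (simp add: algebra_simps) (metis add.commute diff_add_cancel add_diff_cancel_left' mult.commute  mult_1 distrib_left)
    finally show ?thesis .
  qed
  have Dpos: "0 < D" unfolding D_def using a0 by (simp add: add_pos_nonneg)
  have rephi: "Re (phi_nc z) = N / D"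
    unfolding phi_nc_def Re_divide D[symmetric]
    by (simp add: N_def recos imcos x_def y_def)
  have S0: "0 \<le> S" using Sy y0 by simp
  have C0: "0 \<le> C" using Clow u0 by simp
  have Ssq: "S^2 \<le> u * (1 + r/2)^2"
  proof -
    have "S^2 \<le> (y + y^2/2)^2" using S0 Sup by (simp add: power_mono)
    also have "\<dots> = u * (1 + y/2)^2" by (simp add: u_def power2_eq_square algebra_simps)
    also have "\<dots> \<le> u * (1 + r/2)^2"
      by (rule mult_left_mono[OF power_mono]) (use yr y0 u0 in auto)
    finally show ?thesis .
  qed
  have Lb: "(1 - r) * D \<le> (1 - r) * (p^2 + u * (1 + (1 + r/2)^2))"
    by (rule mult_left_mono) (use asq Ssq r in \<open>auto simp: D_def algebra_simps\<close>)
  have x1: "0 \<le> 1 + x" using xr r by linarith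
  have T1: "(1 + x) * ((p + 25/72*u) * (1 + u/4)) \<le> (1 + x) * (a * C)"
    by (rule mult_left_mono[OF mult_mono[OF alow Clow]]) (use p0 u0 a0 x1 in auto)
  have key: "(1 - r) * D \<le> p * N"
  proof (cases "x \<le> 0")
    case True
    have bl: "-x + x^3/6 \<le> - b" using sin_lower[of "-x"] True by (simp add: b_def)
    have xx: "0 \<le> -x + x^3/6"
    proof -
      have "x^2 \<le> 1" using xr r by (metis abs_le_square_iff abs_of_pos less_imp_le order_trans power_one abs_ge_zero power2_abs pos2 not_le)
      then have "-x * x^2 \<le> -x * 1" by (rule mult_left_mono) (use True in auto)
      then have "x \<le> x^3" by (simp add: power3_eq_cube power2_eq_square mult.assoc)
      then show ?thesis using True by linarith
    qed
    have yS: "u \<le> y * S" using mult_left_mono[OF Sy y0] by (simp add: u_def power2_eq_square)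
    have T2: "(-x + x^3/6) * u \<le> (- b) * (y * S)"
      by (rule mult_mono[OF bl yS]) (use xx y0 S0 bl u0 in auto)
    have N1: "(1 + x) * ((p + 25/72*u) * (1 + u/4)) + (-x + x^3/6) * u \<le> N"
      using T1 T2 by (simp add: N_def algebra_simps)
    have q: "(r + x) * ((1-r)*(r-x)*(1 + (1+r/2)^2)) \<le> (r + x) * (p^2*(1 + (1+x)*(r-x)/4)
     + (25/72)*p*(1+x)*(r-x)*(1+(r^2-x^2)/4) + p*(-x+x^3/6)*(r-x))"
      by (rule mult_left_mono[OF Qneg]) (use r xr True pl p1 in auto)
    have eq1: "(r + x) * ((1-r)*(r-x)*(1 + (1+r/2)^2)) = (1 - r) * (p^2 + u * (1 + (1 + r/2)^2)) - (1-r)*p^2"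
      unfolding u by (simp add: field_simps power2_eq_square power3_eq_cube)
    have eq2: "(r + x) * (p^2*(1 + (1+x)*(r-x)/4)
     + (25/72)*p*(1+x)*(r-x)*(1+(r^2-x^2)/4) + p*(-x+x^3/6)*(r-x))
      = p * ((1 + x) * ((p + 25/72*u) * (1 + u/4)) + (-x + x^3/6) * u) - (1-r)*p^2"
      unfolding u by (simp add: field_simps power2_eq_square power3_eq_cube)
    have "(1 - r) * (p^2 + u * (1 + (1 + r/2)^2)) \<le> p * ((1 + x) * ((p + 25/72*u) * (1 + u/4)) + (-x + x^3/6) * u)"
      using q eq1 eq2 by linarith
    also have "\<dots> \<le> p * N" by (rule mult_left_mono[OF N1]) (use p0 in auto)
    finally show ?thesis using Lb by linarith
  next
    case False
    have b0: "0 \<le> b" unfolding b_def by (rule sin_ge_zero) (use False xr r pi_gt3 in auto)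
    have bx: "b \<le> x" unfolding b_def by (rule sin_x_le_x) (use False in auto)
    have yS: "y * S \<le> u * (1 + r/2)"
    proof -
      have "y * S \<le> y * (y + y^2/2)" by (rule mult_left_mono[OF Sup y0])
      also have "\<dots> = u * (1 + y/2)" by (simp add: u_def power2_eq_square algebra_simps)
      also have "\<dots> \<le> u * (1 + r/2)" by (rule mult_left_mono) (use yr u0 in auto)
      finally show ?thesis .
    qed
    have T2: "b * (y * S) \<le> x * (u * (1 + r/2))"
      by (rule mult_mono[OF bx yS]) (use False y0 S0 in auto)
    have N1: "(1 + x) * ((p + 25/72*u) * (1 + u/4)) - x * (u * (1 + r/2)) \<le> N"
      using T1 T2 by (simp add: N_def algebra_simps)
    have q: "(r + x) * ((1-r)*(r-x)*(1 + (1+r/2)^2) + p*x*(r-x)*(1+r/2)) \<le> (r + x) * (p^2*(1 + (1+x)*(r-x)/4)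
     + (25/72)*p*(1+x)*(r-x)*(1+(r^2-x^2)/4))"
      by (rule mult_left_mono[OF Qpos]) (use r xr False pl p1 in auto)
    have eq1: "(r + x) * ((1-r)*(r-x)*(1 + (1+r/2)^2) + p*x*(r-x)*(1+r/2)) = (1 - r) * (p^2 + u * (1 + (1 + r/2)^2)) - (1-r)*p^2 + p * (x * (u * (1 + r/2)))"
      unfolding u by (simp add: field_simps power2_eq_square power3_eq_cube)
    have eq2: "(r + x) * (p^2*(1 + (1+x)*(r-x)/4)
     + (25/72)*p*(1+x)*(r-x)*(1+(r^2-x^2)/4))
      = p * ((1 + x) * ((p + 25/72*u) * (1 + u/4))) - (1-r)*p^2"
      unfolding u by (simp add: field_simps power2_eq_square power3_eq_cube)
    have "(1 - r) * (p^2 + u * (1 + (1 + r/2)^2)) \<le> p * ((1 + x) * ((p + 25/72*u) * (1 + u/4)) - x * (u * (1 + r/2)))"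
      using q eq1 eq2 by (simp add: algebra_simps)
    also have "\<dots> \<le> p * N" by (rule mult_left_mono[OF N1]) (use p0 in auto)
    finally show ?thesis using Lb by linarith
  qed
  show ?thesis unfolding rephi p_def[symmetric] using key p0 Dpos
    by (simp add: field_simps)
qed


lemma phi_cnj: "phi_nc (cnj z) = cnj (phi_nc z)"
  by (simp add: phi_nc_def cnj_cos)

lemma main_lower_all:
  fixes z :: complex and r :: real
  assumes r: "0 < r" "r < 1" and z: "cmod z = r"
  shows "(1 - r) / cos r \<le> Re (phi_nc z)"
proof (cases "0 \<le> Im z")
  case True
  then show ?thesis using main_lower[OF r z] by simp
next
  case False
  have "(1 - r) / cos r \<le> Re (phi_nc (cnj z))"
    by (rule main_lower[OF r]) (use z False in auto)
  then show ?thesis by (simp add: phi_cnj)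
qed

lemma main_upper:
  fixes z :: complex and r :: real
  assumes r: "0 < r" "r < 1" and z: "cmod z = r"
  shows "Re (phi_nc z) \<le> (1 + r) / cos r"
proof -
  define x where "x = Re z"
  define y where "y = Im z"
  define E where "E = exp y"
  define F where "F = exp (-y)"
  have xy: "x^2 + y^2 = r^2" using z cmod_power2[of z] by (simp add: x_def y_def)
  have xr: "\<bar>x\<bar> \<le> r" using xy r
    by (metis abs_of_pos add_0 add.commute le_add_same_cancel2 power2_le_imp_le power2_abs zero_le_power2 less_imp_le abs_ge_zero)
  have pi2: "r < pi/2" using r pi_gt3 by linarith
  have p0: "0 < cos r" by (rule cos_gt_zero) (use r pi2 in auto)
  have "0 \<le> r^2 - x^2" using xy by (metis add_diff_cancel_left' zero_le_power2)
  then have "0 \<le> 25/72 * (r^2 - x^2)" by simp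
  then have ap: "cos r \<le> cos x" using cos_diff_lower[OF xr r(2)] by linarith
  have e1: "1 + y \<le> E" unfolding E_def by (rule exp_ge_add_one_self)
  have e2: "1 + (-y) \<le> F" unfolding F_def by (rule exp_ge_add_one_self)
  have EF: "2 \<le> E + F" using e1 e2 by linarith
  have "cos x * 1 \<le> cos x * ((E + F)/2)"
    by (rule mult_left_mono) (use EF ap p0 in auto)
  also have "\<dots> = Re (cos z)" by (simp add: Re_cos x_def y_def E_def F_def)
  also have "\<dots> \<le> cmod (cos z)" by (rule complex_Re_le_cmod)
  finally have cz: "cos r \<le> cmod (cos z)" using ap by linarith
  have n1: "cmod (1 + z) \<le> 1 + r" using norm_triangle_ineq[of 1 z] z by simp
  have "Re (phi_nc z) \<le> cmod (phi_nc z)" by (rule complex_Re_le_cmod)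
  also have "\<dots> = cmod (1 + z) / cmod (cos z)" by (simp add: phi_nc_def norm_divide)
  also have "\<dots> \<le> (1 + r) / cos r"
    by (rule frac_le) (use n1 cz p0 r in auto)
  finally show ?thesis .
qed

lemma phi_real: "phi_nc (complex_of_real t) = complex_of_real ((1 + t) / cos t)"
  by (simp add: phi_nc_def cos_of_real)

theorem mainTheorem2:
  fixes r :: real
  assumes "0 < r" and "r < 1"
  shows "phi_nc (- complex_of_real r) \<in> \<real> \<and>
         (\<forall>z. cmod z = r \<longrightarrow> Re (phi_nc (- complex_of_real r)) \<le> Re (phi_nc z)) \<and>
         phi_nc (complex_of_real r) \<in> \<real> \<and>
         (\<forall>z. cmod z = r \<longrightarrow> Re (phi_nc z) \<le> Re (phi_nc (complex_of_real r)))"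
proof -
  have m: "- complex_of_real r = complex_of_real (- r)" by simp
  have a: "phi_nc (- complex_of_real r) = complex_of_real ((1 - r) / cos r)"
    unfolding m phi_real by simp
  show ?thesis
    unfolding a phi_real
    using main_lower_all[OF assms] main_upper[OF assms] by auto
qed

end
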